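(* Consider binary data $(x,y^* )$ with real covariate $x$ and true label $y^*\in\{0,1\}$, $p_k^*=\mathbb{P}(y^*=k)>0$, where covariates with true label $k$ have density $f_k^*$; let $X_k^*\sim f_k^*$ and assume $\mathbb{E}|X_k^*|<\infty$, $\mathbb{E}[X_1^*]>0$, $\mathbb{E}[X_0^*]<0$, $\mathbb{P}(X_1^*<0)>0$, $\mathbb{P}(X_0^*>0)>0$. Suppose observed labels $y$ arise by flipping each true label to the other class, independently across observations, with a probability that may depend on the true label and on $x$. Let $p_k=\mathbb{P}(y=k)$, let $X_k$ have the law of $x$ given $y=k$, and let $X$ have the (unconditional) law of $x$. Assume (iii) $\mathbb{E}[X_1^*]\ge\mathbb{E}[X_1]$ and $\mathbb{E}[X_0^*]\le\mathbb{E}[X_0]$; (iv) $p_1^*\mathbb{E}[X_1^*]-p_0^*\mathbb{E}[X_0^*]>p_1\mathbb{E}[X_1]-p_0\mathbb{E}[X_0]$. Define \[ \mathcal{L}^*(s)=s\big(p_1^*\mathbb{E}[X_1^*]-p_0^*\mathbb{E}[X_0^*]\big)-\mathbb{E}\big[\log(e^{sX}+e^{-sX})\big],\quad \mathcal{L}(s)=s\big(p_1\mathbb{E}[X_1]-p_0\mathbb{E}[X_0]\big)-\mathbb{E}\big[\log(e^{sX}+e^{-sX})\big], \] and suppose $\mathcal{L}^*$ and $\mathcal{L}$ attain their maxima over $s\in\mathbb{R}$ at $\hat s^*$ and $\hat s$ respectively. Then $\hat s<\hat s^*$.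
   Context: The model is one-dimensional logistic regression without intercept, $\mathbb{P}(y^*=1\mid x)=e^{sx}/(e^{sx}+e^{-sx})$; $\mathcal{L}^*$ and $\mathcal{L}$ are the large-sample limits of the normalised log-likelihoods on clean and on mislabelled data, so $\hat s^*$ and $\hat s$ are the limiting standard logistic regression estimates of $s$ from clean and noisy data. *)

theory Defs
  imports "HOL-Probability.Probability"
begin

text \<open>Large-sample normalised log-likelihood of the no-intercept logistic model
  P(y=1|x) = e^{sx}/(e^{sx}+e^{-sx}):  L(s) = s*c - E[log(e^{sX}+e^{-sX})],
  where c = p_1 E[X_1] - p_0 E[X_0].\<close>
definition logit_obj :: "'a measure \<Rightarrow> ('a \<Rightarrow> real) \<Rightarrow> real \<Rightarrow> real \<Rightarrow> real" where
  "logit_obj M X c s = s * c - (\<integral>\<omega>. ln (exp (s * X \<omega>) + exp (- (s * X \<omega>))) \<partial>M)"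

end

theory Submission
  imports Defs "HOL-Real_Asymp.Real_Asymp"
begin

lemma cosh_prod: fixes a b :: real shows "cosh (a+b) * cosh (a-b) = cosh a ^2 + sinh b ^2"
proof -
  have A: "cosh b * cosh b = sinh b * sinh b + 1" "sinh a * sinh a = cosh a * cosh a - 1"
    using cosh_square_eq[of a] cosh_square_eq[of b] by (simp_all add: power2_eq_square)
  have "cosh (a+b) * cosh (a-b) = (cosh a * cosh b + sinh a * sinh b) * (cosh a * cosh b - sinh a * sinh b)"
    by (simp add: cosh_add cosh_diff)
  also have "\<dots> = cosh a * cosh a * (cosh b * cosh b) - (sinh a * sinh a) * (sinh b * sinh b)"
    by (simp add: algebra_simps)
  also have "\<dots> = cosh a * cosh a * (sinh b * sinh b + 1) - (cosh a * cosh a - 1) * (sinh b * sinh b)"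
    unfolding A ..
  also have "\<dots> = cosh a ^2 + sinh b ^2" by (simp add: power2_eq_square algebra_simps)
  finally show ?thesis .
qed

definition phi :: "real \<Rightarrow> real" where "phi y = ln (exp y + exp (- y))"

lemma phi_cosh: "phi y = ln 2 + ln (cosh y)"
proof -
  have "exp y + exp (-y) = 2 * cosh y" by (simp add: cosh_def)
  then show ?thesis unfolding phi_def by (simp add: ln_mult cosh_real_pos)
qed

lemma phi_bounds: "\<bar>y\<bar> \<le> phi y" "phi y \<le> \<bar>y\<bar> + 1"
proof -
  have pos: "0 < exp y + exp (-y)" by (simp add: add_pos_pos)
  have e1: "exp \<bar>y\<bar> \<le> exp y + exp (-y)"
  proof (cases "y \<ge> 0")
    case True
    then have "\<bar>y\<bar> = y" by simp
    then show ?thesis using exp_gt_zero[of "-y"] by simp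
  next
    case False
    then have "\<bar>y\<bar> = -y" by simp
    then show ?thesis using exp_gt_zero[of "y"] by simp
  qed
  have "ln (exp \<bar>y\<bar>) \<le> ln (exp y + exp (-y))"
    using e1 pos by (subst ln_le_cancel_iff) simp_all
  then show "\<bar>y\<bar> \<le> phi y" unfolding phi_def by simp
  have e2: "exp y + exp (-y) \<le> 2 * exp \<bar>y\<bar>"
  proof (cases "y \<ge> 0")
    case True
    then have "\<bar>y\<bar> = y" "exp (-y) \<le> exp y" by simp_all
    then show ?thesis by simp
  next
    case False
    then have "\<bar>y\<bar> = -y" "exp y \<le> exp (-y)" by simp_all
    then show ?thesis by simp
  qed
  have "2 \<le> exp (1::real)" using exp_ge_add_one_self[of 1] by simp
  then have "2 * exp \<bar>y\<bar> \<le> exp 1 * exp \<bar>y\<bar>" by (intro mult_right_mono) simp_all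
  also have "\<dots> = exp (\<bar>y\<bar> + 1)" by (simp add: exp_add)
  finally have e3: "exp y + exp (-y) \<le> exp (\<bar>y\<bar> + 1)" using e2 by linarith
  have "ln (exp y + exp (-y)) \<le> ln (exp (\<bar>y\<bar> + 1))"
    using e3 pos by (subst ln_le_cancel_iff) simp_all
  then show "phi y \<le> \<bar>y\<bar> + 1" unfolding phi_def by simp
qed

lemma phi_lip: "phi (a + b) \<le> phi a + \<bar>b\<bar>"
proof -
  have "exp (a+b) + exp (-(a+b)) \<le> exp \<bar>b\<bar> * (exp a + exp (-a))"
  proof -
    have "exp (a+b) \<le> exp \<bar>b\<bar> * exp a" by (simp add: exp_add[symmetric])
    moreover have "exp (-(a+b)) \<le> exp \<bar>b\<bar> * exp (-a)" by (simp add: exp_add[symmetric])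
    ultimately show ?thesis by (simp add: algebra_simps)
  qed
  then have "phi (a+b) \<le> ln (exp \<bar>b\<bar> * (exp a + exp (-a)))" unfolding phi_def
    by (simp add: add_pos_pos)
  also have "\<dots> = \<bar>b\<bar> + phi a"
  proof -
    have "exp a + exp (-a) > 0" by (simp add: add_pos_pos)
    then show ?thesis by (simp add: ln_mult phi_def)
  qed
  finally show ?thesis by simp
qed

lemma phi_second: "phi (a + b) + phi (a - b) - 2 * phi a \<le> sinh b ^ 2"
    "phi (a + b) + phi (a - b) - 2 * phi a \<le> 2 * \<bar>b\<bar>"
proof -
  have ca: "cosh a > 0" "cosh (a+b) > 0" "cosh (a-b) > 0" by (simp_all add: cosh_real_pos)
  have m1: "ln (cosh (a+b) * cosh (a-b)) = ln (cosh (a+b)) + ln (cosh (a-b))"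
    using ca by (intro ln_mult_pos) auto
  have m2: "ln (cosh a ^ 2) = 2 * ln (cosh a)"
    using ca by (simp add: ln_realpow)
  have "phi (a + b) + phi (a - b) - 2 * phi a = ln (cosh (a+b) * cosh (a-b)) - ln (cosh a ^ 2)"
    unfolding m1 m2 phi_cosh by simp
  also have "cosh (a+b) * cosh (a-b) = cosh a ^2 + sinh b ^2" by (rule cosh_prod)
  also have "ln (cosh a ^2 + sinh b ^2) - ln (cosh a ^ 2) = ln ((cosh a ^2 + sinh b ^2) / cosh a ^ 2)"
  proof -
    have "cosh a ^2 + sinh b ^2 > 0" using ca by (intro add_pos_nonneg) auto
    moreover have "cosh a ^ 2 > 0" using ca by simp
    ultimately show ?thesis by (simp add: ln_divide_pos)
  qed
  also have "\<dots> = ln (1 + sinh b ^2 / cosh a ^ 2)"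
    using ca by (simp add: add_divide_distrib)
  also have "\<dots> \<le> sinh b ^2 / cosh a ^ 2"
    by (rule ln_add_one_self_le_self) simp
  also have "\<dots> \<le> sinh b ^ 2"
  proof -
    have "1 \<le> cosh a ^ 2" using cosh_real_ge_1[of a] by (simp add: one_le_power)
    then show ?thesis by (simp add: divide_le_eq mult_le_cancel_left1)
  qed
  finally show "phi (a + b) + phi (a - b) - 2 * phi a \<le> sinh b ^ 2" .
  show "phi (a + b) + phi (a - b) - 2 * phi a \<le> 2 * \<bar>b\<bar>"
    using phi_lip[of a b] phi_lip[of a "-b"] by simp
qed


lemma sinh_meas[measurable]: "(sinh :: real \<Rightarrow> real) \<in> borel_measurable borel"
  by (rule borel_measurable_continuous_onI, rule continuous_at_imp_continuous_on) (simp add: isCont_sinh)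

lemma gbound: assumes "(h::real) > 0" shows "\<bar>min (sinh (h * x) ^ 2 / h) (2 * \<bar>x\<bar>)\<bar> \<le> 2 * \<bar>x\<bar>"
proof -
  have "0 \<le> sinh (h * x) ^ 2 / h" using assms by simp
  moreover have "min (sinh (h * x) ^ 2 / h) (2 * \<bar>x\<bar>) \<le> 2 * \<bar>x\<bar>" by (rule min.cobounded2)
  moreover have "0 \<le> 2 * \<bar>x\<bar>" by simp
  ultimately show ?thesis by (simp add: abs_le_iff min_def)
qed

lemma lim1: fixes x::real shows "(\<lambda>n::nat. sinh (x / (real n + 1))^2 * (real n + 1)) \<longlonglongrightarrow> 0"
proof -
  consider "x > 0" | "x < 0" | "x = 0" by linarith
  then show ?thesis
  proof cases
    case 1 then show ?thesis by real_asymp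
  next
    case 2 then show ?thesis by real_asymp
  next
    case 3 then show ?thesis by simp
  qed
qed

lemma int_on_M:
  assumes ps: "prob_space M" and Xm[measurable]: "X \<in> borel_measurable M"
    and A[measurable]: "{\<omega> \<in> space M. P \<omega>} \<in> sets M"
    and pA: "measure M {\<omega> \<in> space M. P \<omega>} > 0" and pB: "measure M {\<omega> \<in> space M. \<not> P \<omega>} > 0"
    and iA: "integrable (uniform_measure M {\<omega> \<in> space M. P \<omega>}) X"
    and iB: "integrable (uniform_measure M {\<omega> \<in> space M. \<not> P \<omega>}) X"
  shows "integrable M (X :: _ \<Rightarrow> real)"
proof -
  interpret prob_space M by fact
  have fin: "(\<integral>\<^sup>+x. ennreal \<bar>X x\<bar> * indicator S x \<partial>M) < top"
    if S: "S \<in> sets M" "measure M S > 0" "integrable (uniform_measure M S) X" for S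
  proof -
    have 1: "(\<integral>\<^sup>+x. ennreal (norm (X x)) \<partial>uniform_measure M S) < top"
      using S(3) by (simp add: integrable_iff_bounded)
    have mX: "(\<lambda>x. ennreal \<bar>X x\<bar>) \<in> borel_measurable M" by measurable
    have 2: "(\<integral>\<^sup>+x. ennreal \<bar>X x\<bar> \<partial>uniform_measure M S)
        = (\<integral>\<^sup>+x. ennreal \<bar>X x\<bar> * indicator S x \<partial>M) / emeasure M S"
      by (rule nn_integral_uniform_measure[OF mX S(1)])
    have 3: "emeasure M S = ennreal (measure M S)" by (rule emeasure_eq_measure)
    show ?thesis
    proof (rule ccontr)
      assume "\<not> ?thesis"
      then have "(\<integral>\<^sup>+x. ennreal \<bar>X x\<bar> * indicator S x \<partial>M) = top" using top.not_eq_extremum by blast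
      then have "(\<integral>\<^sup>+x. ennreal \<bar>X x\<bar> \<partial>uniform_measure M S) = top"
        unfolding 2 3 by (simp add: ennreal_divide_eq_top_iff)
      with 1 show False by simp
    qed
  qed
  have B[measurable]: "{\<omega> \<in> space M. \<not> P \<omega>} \<in> sets M"
  proof -
    have "{\<omega> \<in> space M. \<not> P \<omega>} = space M - {\<omega> \<in> space M. P \<omega>}" by blast
    then show ?thesis using A by (metis sets.compl_sets)
  qed
  have m1: "(\<lambda>x. ennreal \<bar>X x\<bar> * indicator {\<omega> \<in> space M. P \<omega>} x) \<in> borel_measurable M" by measurable
  have m2: "(\<lambda>x. ennreal \<bar>X x\<bar> * indicator {\<omega> \<in> space M. \<not> P \<omega>} x) \<in> borel_measurable M" by measurable
  have "(\<integral>\<^sup>+x. ennreal \<bar>X x\<bar> \<partial>M) = (\<integral>\<^sup>+x. ennreal \<bar>X x\<bar> * indicator {\<omega> \<in> space M. P \<omega>} x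
            + ennreal \<bar>X x\<bar> * indicator {\<omega> \<in> space M. \<not> P \<omega>} x \<partial>M)"
  proof (rule nn_integral_cong)
    fix x assume "x \<in> space M"
    then show "ennreal \<bar>X x\<bar> = ennreal \<bar>X x\<bar> * indicator {\<omega> \<in> space M. P \<omega>} x
            + ennreal \<bar>X x\<bar> * indicator {\<omega> \<in> space M. \<not> P \<omega>} x"
      by (cases "P x") (simp_all add: indicator_def)
  qed
  also have "\<dots> = (\<integral>\<^sup>+x. ennreal \<bar>X x\<bar> * indicator {\<omega> \<in> space M. P \<omega>} x \<partial>M)
            + (\<integral>\<^sup>+x. ennreal \<bar>X x\<bar> * indicator {\<omega> \<in> space M. \<not> P \<omega>} x \<partial>M)"
    by (rule nn_integral_add[OF m1 m2])
  also have "\<dots> < top" using fin[OF A pA iA] fin[OF B pB iB] by (simp add: ennreal_add_eq_top top.not_eq_extremum)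
  finally have "(\<integral>\<^sup>+x. ennreal (norm (X x)) \<partial>M) < top" by simp
  then show ?thesis using Xm by (simp add: integrable_iff_bounded)
qed

lemma phi_meas: assumes [measurable]: "X \<in> borel_measurable M"
  shows "(\<lambda>\<omega>. phi (s * X \<omega>)) \<in> borel_measurable M"
  unfolding phi_def by measurable

lemma phi_int:
  assumes "prob_space M" "integrable M X"
  shows "integrable M (\<lambda>\<omega>. phi (s * X \<omega>))"
proof -
  interpret prob_space M by fact
  have Xm: "X \<in> borel_measurable M" using assms by simp
  show ?thesis
  proof (rule Bochner_Integration.integrable_bound)
    show "integrable M (\<lambda>\<omega>. \<bar>s\<bar> * \<bar>X \<omega>\<bar> + 1)" using assms(2) by simp
    show "(\<lambda>\<omega>. phi (s * X \<omega>)) \<in> borel_measurable M" by (rule phi_meas[OF Xm])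
    show "AE x in M. norm (phi (s * X x)) \<le> norm (\<bar>s\<bar> * \<bar>X x\<bar> + 1)"
    proof (rule AE_I2)
      fix x
      have "0 \<le> phi (s * X x)" using phi_bounds(1)[of "s * X x"] by linarith
      then show "norm (phi (s * X x)) \<le> norm (\<bar>s\<bar> * \<bar>X x\<bar> + 1)"
        using phi_bounds(2)[of "s * X x"] by (simp add: abs_mult)
    qed
  qed
qed
theorem proposition2:
  fixes M :: "'a measure" and X :: "'a \<Rightarrow> real" and Ys Y :: "'a \<Rightarrow> bool"
    and s_hat_star s_hat :: real
  assumes ps: "prob_space M"
    and X_meas: "X \<in> borel_measurable M"
    and Ys_ev: "{\<omega> \<in> space M. Ys \<omega>} \<in> sets M"
    and Y_ev: "{\<omega> \<in> space M. Y \<omega>} \<in> sets M"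
    and p1s_pos: "measure M {\<omega> \<in> space M. Ys \<omega>} > 0"
    and p0s_pos: "measure M {\<omega> \<in> space M. \<not> Ys \<omega>} > 0"
    and p1_pos: "measure M {\<omega> \<in> space M. Y \<omega>} > 0"
    and p0_pos: "measure M {\<omega> \<in> space M. \<not> Y \<omega>} > 0"
    and dens1: "\<exists>f. distributed (uniform_measure M {\<omega> \<in> space M. Ys \<omega>}) lborel X f"
    and dens0: "\<exists>f. distributed (uniform_measure M {\<omega> \<in> space M. \<not> Ys \<omega>}) lborel X f"
    and int1: "integrable (uniform_measure M {\<omega> \<in> space M. Ys \<omega>}) X"
    and int0: "integrable (uniform_measure M {\<omega> \<in> space M. \<not> Ys \<omega>}) X"
    and mean1: "(\<integral>\<omega>. X \<omega> \<partial>uniform_measure M {\<omega> \<in> space M. Ys \<omega>}) > 0"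
    and mean0: "(\<integral>\<omega>. X \<omega> \<partial>uniform_measure M {\<omega> \<in> space M. \<not> Ys \<omega>}) < 0"
    and neg1: "measure (uniform_measure M {\<omega> \<in> space M. Ys \<omega>}) {\<omega> \<in> space M. X \<omega> < 0} > 0"
    and pos0: "measure (uniform_measure M {\<omega> \<in> space M. \<not> Ys \<omega>}) {\<omega> \<in> space M. X \<omega> > 0} > 0"
    and iii1: "(\<integral>\<omega>. X \<omega> \<partial>uniform_measure M {\<omega> \<in> space M. Ys \<omega>})
               \<ge> (\<integral>\<omega>. X \<omega> \<partial>uniform_measure M {\<omega> \<in> space M. Y \<omega>})"
    and iii0: "(\<integral>\<omega>. X \<omega> \<partial>uniform_measure M {\<omega> \<in> space M. \<not> Ys \<omega>})
               \<le> (\<integral>\<omega>. X \<omega> \<partial>uniform_measure M {\<omega> \<in> space M. \<not> Y \<omega>})"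
    and iv: "measure M {\<omega> \<in> space M. Ys \<omega>} * (\<integral>\<omega>. X \<omega> \<partial>uniform_measure M {\<omega> \<in> space M. Ys \<omega>})
             - measure M {\<omega> \<in> space M. \<not> Ys \<omega>} * (\<integral>\<omega>. X \<omega> \<partial>uniform_measure M {\<omega> \<in> space M. \<not> Ys \<omega>})
           > measure M {\<omega> \<in> space M. Y \<omega>} * (\<integral>\<omega>. X \<omega> \<partial>uniform_measure M {\<omega> \<in> space M. Y \<omega>})
             - measure M {\<omega> \<in> space M. \<not> Y \<omega>} * (\<integral>\<omega>. X \<omega> \<partial>uniform_measure M {\<omega> \<in> space M. \<not> Y \<omega>})"
    and max_star: "\<forall>s. logit_obj M X
             (measure M {\<omega> \<in> space M. Ys \<omega>} * (\<integral>\<omega>. X \<omega> \<partial>uniform_measure M {\<omega> \<in> space M. Ys \<omega>})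
              - measure M {\<omega> \<in> space M. \<not> Ys \<omega>} * (\<integral>\<omega>. X \<omega> \<partial>uniform_measure M {\<omega> \<in> space M. \<not> Ys \<omega>})) s
           \<le> logit_obj M X
             (measure M {\<omega> \<in> space M. Ys \<omega>} * (\<integral>\<omega>. X \<omega> \<partial>uniform_measure M {\<omega> \<in> space M. Ys \<omega>})
              - measure M {\<omega> \<in> space M. \<not> Ys \<omega>} * (\<integral>\<omega>. X \<omega> \<partial>uniform_measure M {\<omega> \<in> space M. \<not> Ys \<omega>})) s_hat_star"
    and max_obs: "\<forall>s. logit_obj M X
             (measure M {\<omega> \<in> space M. Y \<omega>} * (\<integral>\<omega>. X \<omega> \<partial>uniform_measure M {\<omega> \<in> space M. Y \<omega>})
              - measure M {\<omega> \<in> space M. \<not> Y \<omega>} * (\<integral>\<omega>. X \<omega> \<partial>uniform_measure M {\<omega> \<in> space M. \<not> Y \<omega>})) s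
           \<le> logit_obj M X
             (measure M {\<omega> \<in> space M. Y \<omega>} * (\<integral>\<omega>. X \<omega> \<partial>uniform_measure M {\<omega> \<in> space M. Y \<omega>})
              - measure M {\<omega> \<in> space M. \<not> Y \<omega>} * (\<integral>\<omega>. X \<omega> \<partial>uniform_measure M {\<omega> \<in> space M. \<not> Y \<omega>})) s_hat"
  shows "s_hat < s_hat_star"
proof (rule ccontr)
  assume nlt: "\<not> s_hat < s_hat_star"
  interpret prob_space M by (rule ps)
  have Xint: "integrable M X"
    by (rule int_on_M[OF ps X_meas Ys_ev p1s_pos p0s_pos int1 int0])
  define cs where "cs = measure M {\<omega> \<in> space M. Ys \<omega>} * (\<integral>\<omega>. X \<omega> \<partial>uniform_measure M {\<omega> \<in> space M. Ys \<omega>})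
             - measure M {\<omega> \<in> space M. \<not> Ys \<omega>} * (\<integral>\<omega>. X \<omega> \<partial>uniform_measure M {\<omega> \<in> space M. \<not> Ys \<omega>})"
  define c where "c = measure M {\<omega> \<in> space M. Y \<omega>} * (\<integral>\<omega>. X \<omega> \<partial>uniform_measure M {\<omega> \<in> space M. Y \<omega>})
             - measure M {\<omega> \<in> space M. \<not> Y \<omega>} * (\<integral>\<omega>. X \<omega> \<partial>uniform_measure M {\<omega> \<in> space M. \<not> Y \<omega>})"
  have del: "c < cs" using iv unfolding cs_def c_def .
  define G where "G s = (\<integral>\<omega>. phi (s * X \<omega>) \<partial>M)" for s
  have L: "logit_obj M X k s = s * k - G s" for k s
    unfolding logit_obj_def G_def phi_def by simp
  have ms: "\<And>s. s * cs - G s \<le> s_hat_star * cs - G s_hat_star"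
    using max_star[unfolded L, folded cs_def] by blast
  have mo: "\<And>s. s * c - G s \<le> s_hat * c - G s_hat"
    using max_obs[unfolded L, folded c_def] by blast
  have "s_hat_star * cs + s_hat * c \<ge> s_hat * cs + s_hat_star * c"
    using ms[of s_hat] mo[of s_hat_star] by linarith
  then have "(s_hat_star - s_hat) * (cs - c) \<ge> 0" by (simp add: algebra_simps)
  then have "s_hat_star - s_hat \<ge> 0" using del by (simp add: zero_le_mult_iff)
  then have eq: "s_hat = s_hat_star" using nlt by linarith
  define t where "t = s_hat_star"
  have key: "h * (cs - c) \<le> G (t + h) + G (t - h) - 2 * G t" if "h > 0" for h
  proof -
    have 1: "(t + h) * cs - G (t + h) \<le> t * cs - G t" using ms[of "t + h"] unfolding t_def .
    have 2: "(t - h) * c - G (t - h) \<le> t * c - G t" using mo[of "t - h"] unfolding t_def eq .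
    show ?thesis using 1 2 by (simp add: algebra_simps)
  qed
  define g where "g h x = min (sinh (h * x) ^ 2 / h) (2 * \<bar>x\<bar>)" for h x :: real
  have gm: "(\<lambda>\<omega>. g h (X \<omega>)) \<in> borel_measurable M" for h
  proof -
    note X_meas[measurable]
    show ?thesis unfolding g_def by measurable
  qed
  have gint: "integrable M (\<lambda>\<omega>. g h (X \<omega>))" if "h > 0" for h
  proof (rule Bochner_Integration.integrable_bound)
    show "integrable M (\<lambda>\<omega>. 2 * \<bar>X \<omega>\<bar>)" using Xint by simp
    show "(\<lambda>\<omega>. g h (X \<omega>)) \<in> borel_measurable M" by (rule gm)
    show "AE x in M. norm (g h (X x)) \<le> norm (2 * \<bar>X x\<bar>)"
      using gbound[OF that] by (intro AE_I2) (simp add: g_def)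
  qed
  have lower: "cs - c \<le> (\<integral>\<omega>. g h (X \<omega>) \<partial>M)" if hp: "h > 0" for h
  proof -
    have pw: "phi ((t + h) * x) + phi ((t - h) * x) - 2 * phi (t * x) \<le> h * g h x" for x
    proof -
      have e1: "(t + h) * x = t * x + h * x" "(t - h) * x = t * x - h * x" by (simp_all add: algebra_simps)
      have a: "phi ((t + h) * x) + phi ((t - h) * x) - 2 * phi (t * x) \<le> sinh (h * x) ^ 2"
        unfolding e1 by (rule phi_second(1))
      have b: "phi ((t + h) * x) + phi ((t - h) * x) - 2 * phi (t * x) \<le> h * (2 * \<bar>x\<bar>)"
        unfolding e1 using phi_second(2)[of "t * x" "h * x"] hp by (simp add: abs_mult)
      have iff: "sinh (h * x) ^ 2 / h \<le> 2 * \<bar>x\<bar> \<longleftrightarrow> sinh (h * x) ^ 2 \<le> h * (2 * \<bar>x\<bar>)"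
        using hp by (simp add: divide_le_eq mult.commute)
      have geq: "h * g h x = min (sinh (h * x) ^ 2) (h * (2 * \<bar>x\<bar>))"
        unfolding g_def min_def using hp iff by auto
      have "phi ((t + h) * x) + phi ((t - h) * x) - 2 * phi (t * x) \<le> min (sinh (h * x) ^ 2) (h * (2 * \<bar>x\<bar>))"
        by (rule min.boundedI[OF a b])
      then show ?thesis by (simp only: geq)
    qed
    have i1: "integrable M (\<lambda>\<omega>. phi ((t + h) * X \<omega>))" by (rule phi_int[OF ps Xint])
    have i2: "integrable M (\<lambda>\<omega>. phi ((t - h) * X \<omega>))" by (rule phi_int[OF ps Xint])
    have i3: "integrable M (\<lambda>\<omega>. phi (t * X \<omega>))" by (rule phi_int[OF ps Xint])
    have i12: "integrable M (\<lambda>\<omega>. phi ((t + h) * X \<omega>) + phi ((t - h) * X \<omega>))"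
      by (rule Bochner_Integration.integrable_add[OF i1 i2])
    have i3': "integrable M (\<lambda>\<omega>. 2 * phi (t * X \<omega>))"
      by (rule Bochner_Integration.integrable_mult_right[OF i3])
    have iD: "integrable M (\<lambda>\<omega>. phi ((t + h) * X \<omega>) + phi ((t - h) * X \<omega>) - 2 * phi (t * X \<omega>))"
      by (rule Bochner_Integration.integrable_diff[OF i12 i3'])
    have iG: "integrable M (\<lambda>\<omega>. h * g h (X \<omega>))"
      by (rule Bochner_Integration.integrable_mult_right[OF gint[OF hp]])
    have "h * (cs - c) \<le> G (t + h) + G (t - h) - 2 * G t" by (rule key[OF hp])
    also have "G (t + h) + G (t - h) - 2 * G t
       = (\<integral>\<omega>. phi ((t + h) * X \<omega>) + phi ((t - h) * X \<omega>) - 2 * phi (t * X \<omega>) \<partial>M)"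
    proof -
      have "(\<integral>\<omega>. phi ((t + h) * X \<omega>) + phi ((t - h) * X \<omega>) - 2 * phi (t * X \<omega>) \<partial>M)
          = (\<integral>\<omega>. phi ((t + h) * X \<omega>) + phi ((t - h) * X \<omega>) \<partial>M) - (\<integral>\<omega>. 2 * phi (t * X \<omega>) \<partial>M)"
        by (rule Bochner_Integration.integral_diff[OF i12 i3'])
      also have "(\<integral>\<omega>. phi ((t + h) * X \<omega>) + phi ((t - h) * X \<omega>) \<partial>M) = G (t + h) + G (t - h)"
        unfolding G_def by (rule Bochner_Integration.integral_add[OF i1 i2])
      also have "(\<integral>\<omega>. 2 * phi (t * X \<omega>) \<partial>M) = 2 * G t"
        unfolding G_def by (rule integral_mult_right_zero)
      finally show ?thesis by (rule sym)
    qed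
    also have "\<dots> \<le> (\<integral>\<omega>. h * g h (X \<omega>) \<partial>M)"
      by (rule integral_mono[OF iD iG]) (rule pw)
    also have "\<dots> = h * (\<integral>\<omega>. g h (X \<omega>) \<partial>M)" by (rule integral_mult_right_zero)
    finally have "h * (cs - c) \<le> h * (\<integral>\<omega>. g h (X \<omega>) \<partial>M)" .
    then show ?thesis using hp by (simp add: mult_le_cancel_left_pos)
  qed
  have lim: "(\<lambda>n. \<integral>\<omega>. g (1 / (real n + 1)) (X \<omega>) \<partial>M) \<longlonglongrightarrow> (\<integral>\<omega>. 0 \<partial>M)"
  proof (rule integral_dominated_convergence[where w = "\<lambda>\<omega>. 2 * \<bar>X \<omega>\<bar>"])
    show "(\<lambda>\<omega>. 0::real) \<in> borel_measurable M" by simp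
    show "(\<lambda>\<omega>. g (1 / (real n + 1)) (X \<omega>)) \<in> borel_measurable M" for n by (rule gm)
    show "integrable M (\<lambda>\<omega>. 2 * \<bar>X \<omega>\<bar>)" using Xint by simp
    show "AE x in M. (\<lambda>n. g (1 / (real n + 1)) (X x)) \<longlonglongrightarrow> 0"
    proof (rule AE_I2)
      fix x
      have "(\<lambda>n. min (sinh (X x / (real n + 1)) ^ 2 * (real n + 1)) (2 * \<bar>X x\<bar>)) \<longlonglongrightarrow> min 0 (2 * \<bar>X x\<bar>)"
        by (intro tendsto_min lim1 tendsto_const)
      moreover have "g (1 / (real n + 1)) (X x) = min (sinh (X x / (real n + 1)) ^ 2 * (real n + 1)) (2 * \<bar>X x\<bar>)" for n
        unfolding g_def by simp
      ultimately show "(\<lambda>n. g (1 / (real n + 1)) (X x)) \<longlonglongrightarrow> 0" by simp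
    qed
    show "AE x in M. norm (g (1 / (real n + 1)) (X x)) \<le> 2 * \<bar>X x\<bar>" for n
      using gbound[of "1 / (real n + 1)"] by (intro AE_I2) (simp add: g_def)
  qed
  then have lim0: "(\<lambda>n. \<integral>\<omega>. g (1 / (real n + 1)) (X \<omega>) \<partial>M) \<longlonglongrightarrow> 0" by simp
  have "\<forall>\<^sub>F n in sequentially. (\<integral>\<omega>. g (1 / (real n + 1)) (X \<omega>) \<partial>M) < cs - c"
    using order_tendstoD(2)[OF lim0, of "cs - c"] del by simp
  then obtain n where "(\<integral>\<omega>. g (1 / (real n + 1)) (X \<omega>) \<partial>M) < cs - c"
    by (auto simp: eventually_sequentially)
  moreover have "cs - c \<le> (\<integral>\<omega>. g (1 / (real n + 1)) (X \<omega>) \<partial>M)" by (rule lower) simp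
  ultimately show False by simp
qed

end
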